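(* For any $X_0,X_1\in2^\omega$, the map $r\mapsto\operatorname{Mix}(X_0,X_1,r)$ from $[0,1]$ to $2^\omega$ is continuous with respect to the Besicovitch pseudometric $d$ on $2^\omega$.
   Context: $d(X,Y)=\limsup_{n}|\{m<n:X(m)\ne Y(m)\}|/n$. For $X,Y\in2^\omega$, $(X\oplus Y)(2n)=X(n)$, $(X\oplus Y)(2n+1)=Y(n)$. The map $b:[0,1]\to2^\omega$ is defined recursively by $b(0)=0^\omega$, $b(1)=1^\omega$, $b(r)=0^\omega\oplus b(2r)$ for $0<r\le1/2$, $b(r)=b(2r-1)\oplus1^\omega$ for $1/2\le r<1$. Chunks: $n_j=\sum_{i<j}i$, $I_j=[n_j,n_{j+1})$. $\operatorname{Mix}(X_0,X_1,r)$ is the sequence whose restriction to $I_j$ equals $X_{b(r)(j)}\restriction I_j$ for every $j$. *)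

theory Defs
  imports "HOL-Analysis.Analysis" "HOL-Library.Liminf_Limsup"
begin

text \<open>Elements of Cantor space 2^omega are modelled as nat \<Rightarrow> bool (False = 0, True = 1).\<close>

definition besi_d :: "(nat \<Rightarrow> bool) \<Rightarrow> (nat \<Rightarrow> bool) \<Rightarrow> ereal" where
  "besi_d X Y = limsup (\<lambda>n. ereal (real (card {m. m < n \<and> X m \<noteq> Y m}) / real n))"

definition join :: "(nat \<Rightarrow> bool) \<Rightarrow> (nat \<Rightarrow> bool) \<Rightarrow> (nat \<Rightarrow> bool)" where
  "join X Y = (\<lambda>k. if even k then X (k div 2) else Y (k div 2))"

definition b_spec :: "(real \<Rightarrow> nat \<Rightarrow> bool) \<Rightarrow> bool" where
  "b_spec f \<longleftrightarrow>
     f 0 = (\<lambda>_. False) \<and> f 1 = (\<lambda>_. True) \<and>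
     (\<forall>r. 0 < r \<and> r \<le> 1/2 \<longrightarrow> f r = join (\<lambda>_. False) (f (2*r))) \<and>
     (\<forall>r. 1/2 \<le> r \<and> r < 1 \<longrightarrow> f r = join (f (2*r - 1)) (\<lambda>_. True)) \<and>
     (\<forall>r. r \<notin> {0..1} \<longrightarrow> f r = (\<lambda>_. False))"

definition bmap :: "real \<Rightarrow> nat \<Rightarrow> bool" where
  "bmap = (THE f. b_spec f)"

definition nchunk :: "nat \<Rightarrow> nat" where
  "nchunk j = (\<Sum>i<j. i)"

definition Mix :: "(nat \<Rightarrow> bool) \<Rightarrow> (nat \<Rightarrow> bool) \<Rightarrow> real \<Rightarrow> (nat \<Rightarrow> bool)" where
  "Mix X0 X1 r = (THE Z. \<forall>j. \<forall>m \<in> {nchunk j ..< nchunk (Suc j)}.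
       Z m = (if bmap r j then X1 m else X0 m))"

end

theory Submission
  imports Defs
begin


function theta :: "nat \<Rightarrow> real" where
  "theta 0 = 1"
| "theta (Suc k) = (if even (Suc k) then (1 + theta (Suc k div 2)) / 2 else theta (Suc k div 2) / 2)"
  by pat_completeness auto
termination by (relation "Wellfounded.measure id") (auto, presburger)

declare theta.simps(2)[simp del]

lemma theta_even: "theta (2*i) = (1 + theta i) / 2"
proof (cases i)
  case 0 then show ?thesis by simp
next
  case (Suc j)
  have "theta (2*i) = theta (Suc (Suc (2*j)))" using Suc by simp
  also have "\<dots> = (1 + theta (Suc (Suc (2*j)) div 2)) / 2" by (rule theta.simps(2)[THEN trans]) simp
  also have "Suc (Suc (2*j)) div 2 = i" using Suc by simp
  finally show ?thesis .
qed

lemma theta_odd: "theta (Suc (2*i)) = theta i / 2"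
proof -
  have "theta (Suc (2*i)) = theta (Suc (2*i) div 2) / 2" by (rule theta.simps(2)[THEN trans]) simp
  also have "Suc (2*i) div 2 = i" by simp
  finally show ?thesis .
qed

lemma theta_bounds: "0 < theta k \<and> theta k \<le> 1"
proof (induction k rule: less_induct)
  case (less k)
  show ?case
  proof (cases "k = 0")
    case True then show ?thesis by simp
  next
    case False
    show ?thesis
    proof (cases "even k")
      case True
      then obtain i where k: "k = 2*i" by blast
      have "i < k" using False k by simp
      then show ?thesis using less.IH[of i] by (simp add: k theta_even)
    next
      case F: False
      then obtain i where k: "k = Suc (2*i)" using oddE by (metis Suc_eq_plus1)
      have "i < k" using k by simp
      then show ?thesis using less.IH[of i] by (simp add: k theta_odd)
    qed
  qed
qed


lemma theta_pos: "0 < theta k" and theta_le1: "theta k \<le> 1"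
  using theta_bounds by auto

definition bfun :: "real \<Rightarrow> nat \<Rightarrow> bool" where
  "bfun r k = (0 \<le> r \<and> r \<le> 1 \<and> theta k \<le> r)"

lemma join_even: "join X Y (2*i) = X i" and join_odd: "join X Y (Suc (2*i)) = Y i"
  by (auto simp: join_def)

lemma bfun_spec: "b_spec bfun"
  unfolding b_spec_def
proof (intro conjI allI impI)
  show "bfun 0 = (\<lambda>_. False)" using theta_pos by (auto simp: bfun_def fun_eq_iff not_le)
  show "bfun 1 = (\<lambda>_. True)" using theta_le1 by (auto simp: bfun_def fun_eq_iff)
  fix r :: real
  { assume r: "0 < r \<and> r \<le> 1/2"
    show "bfun r = join (\<lambda>_. False) (bfun (2*r))"
    proof
      fix k
      show "bfun r k = join (\<lambda>_. False) (bfun (2 * r)) k"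
      proof (cases "even k")
        case True
        then obtain i where k: "k = 2*i" by blast
        have "theta k > 1/2" using theta_pos[of i] by (simp add: k theta_even)
        then show ?thesis using r by (simp add: k join_even bfun_def)
      next
        case False
        then obtain i where k: "k = Suc (2*i)" using oddE by (metis Suc_eq_plus1)
        show ?thesis using r by (simp add: k join_odd bfun_def theta_odd) linarith
      qed
    qed }
  { assume r: "1/2 \<le> r \<and> r < 1"
    show "bfun r = join (bfun (2*r-1)) (\<lambda>_. True)"
    proof
      fix k
      show "bfun r k = join (bfun (2*r-1)) (\<lambda>_. True) k"
      proof (cases "even k")
        case True
        then obtain i where k: "k = 2*i" by blast
        show ?thesis using r theta_le1[of i] by (simp add: k theta_even join_even bfun_def) linarith
      next
        case False
        then obtain i where k: "k = Suc (2*i)" using oddE by (metis Suc_eq_plus1)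
        have "theta k \<le> 1/2" using theta_le1[of i] by (simp add: k theta_odd)
        then show ?thesis using r by (simp add: k join_odd bfun_def)
      qed
    qed }
  { assume "r \<notin> {0..1}"
    then show "bfun r = (\<lambda>_. False)" by (auto simp: bfun_def fun_eq_iff) }
qed

lemma spec_zero:
  assumes f: "b_spec f"
  shows "0 \<le> r \<Longrightarrow> r < 1 \<Longrightarrow> f r 0 = False"
proof -
  have P: "\<And>r. 0 \<le> r \<Longrightarrow> r < 1 \<Longrightarrow> 1 - r \<ge> 1/2^N \<Longrightarrow> f r 0 = False" for N
  proof (induction N)
    case 0
    then have "r = 0" by simp
    then show ?case using f by (simp add: b_spec_def)
  next
    case (Suc N)
    show ?case
    proof (cases "r \<le> 1/2")
      case True
      show ?thesis
      proof (cases "r = 0")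
        case True then show ?thesis using f by (simp add: b_spec_def)
      next
        case False
        then have "f r = join (\<lambda>_. False) (f (2*r))" using f True Suc.prems by (simp add: b_spec_def)
        then show ?thesis using join_even[of _ _ 0] by simp
      qed
    next
      case False
      then have "f r = join (f (2*r-1)) (\<lambda>_. True)" using f Suc.prems by (simp add: b_spec_def)
      then have "f r 0 = f (2*r-1) 0" using join_even[of _ _ 0] by simp
      moreover have "f (2*r-1) 0 = False"
        apply (rule Suc.IH) using False Suc.prems by (auto simp: field_simps)
      ultimately show ?thesis by simp
    qed
  qed
  assume r: "0 \<le> r" "r < 1"
  obtain N where "1/2^N < 1 - r" using real_arch_pow_inv[of "1-r" "1/2"] r by (auto simp: power_one_over)
  then show ?thesis using P r less_imp_le by blast
qed

lemma spec_unique: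
  assumes f: "b_spec f"
  shows "f = bfun"
proof -
  have main: "\<forall>r. 0 \<le> r \<and> r \<le> 1 \<longrightarrow> f r k = bfun r k" for k
  proof (induction k rule: less_induct)
    case (less k)
    show ?case
    proof (intro allI impI)
      fix r :: real assume r: "0 \<le> r \<and> r \<le> 1"
      have f0: "f 0 = (\<lambda>_. False)" and f1: "f 1 = (\<lambda>_. True)" using f by (auto simp: b_spec_def)
      have b0: "bfun 0 k = False" using theta_pos[of k] by (simp add: bfun_def)
      have b1: "bfun 1 k = True" using theta_le1[of k] by (simp add: bfun_def)
      consider "r = 0" | "r = 1" | "0 < r \<and> r \<le> 1/2" | "1/2 \<le> r \<and> r < 1" using r by linarith
      then show "f r k = bfun r k"
      proof cases
        case 1 then show ?thesis using f0 b0 by simp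
      next
        case 2 then show ?thesis using f1 b1 by simp
      next
        case 3
        then have fr: "f r = join (\<lambda>_. False) (f (2*r))" using f by (simp add: b_spec_def)
        show ?thesis
        proof (cases "even k")
          case True
          then obtain i where k: "k = 2*i" by blast
          have "theta k > 1/2" using theta_pos[of i] by (simp add: k theta_even)
          then show ?thesis using 3 fr by (simp add: k join_even bfun_def)
        next
          case False
          then obtain i where k: "k = Suc (2*i)" using oddE by (metis Suc_eq_plus1)
          have "f (2*r) i = bfun (2*r) i" using less.IH[of i] 3 k by auto
          then show ?thesis using 3 fr by (simp add: k join_odd bfun_def theta_odd) linarith
        qed
      next
        case 4
        then have fr: "f r = join (f (2*r-1)) (\<lambda>_. True)" using f by (simp add: b_spec_def)
        show ?thesis
        proof (cases "even k")
          case True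
          then obtain i where k: "k = 2*i" by blast
          show ?thesis
          proof (cases "i = 0")
            case True
            then show ?thesis using spec_zero[OF f, of r] 4 by (simp add: k bfun_def)
          next
            case False
            then have "f (2*r-1) i = bfun (2*r-1) i" using less.IH[of i] 4 k by auto
            then show ?thesis using 4 fr theta_le1[of i] by (simp add: k join_even bfun_def theta_even) linarith
          qed
        next
          case False
          then obtain i where k: "k = Suc (2*i)" using oddE by (metis Suc_eq_plus1)
          have "theta k \<le> 1/2" using theta_le1[of i] by (simp add: k theta_odd)
          then show ?thesis using 4 fr by (simp add: k join_odd bfun_def)
        qed
      qed
    qed
  qed
  show ?thesis
  proof (intro ext)
    fix r k
    show "f r k = bfun r k"
    proof (cases "r \<in> {0..1}")
      case True then show ?thesis using main by auto
    next
      case False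
      then show ?thesis using f by (auto simp: b_spec_def bfun_def)
    qed
  qed
qed

lemma bmap_eq: "bmap = bfun"
  unfolding bmap_def
  using bfun_spec spec_unique by blast



definition C :: "real \<Rightarrow> nat \<Rightarrow> nat" where
  "C x n = card {m. m < n \<and> theta m \<le> x}"

lemma C_rec: "C x n = C (2*x-1) ((n+1) div 2) + C (2*x) (n div 2)"
proof -
  let ?A = "{i. i < (n+1) div 2 \<and> theta i \<le> 2*x-1}"
  let ?B = "{i. i < n div 2 \<and> theta i \<le> 2*x}"
  have eq: "{m. m < n \<and> theta m \<le> x} = (\<lambda>i. 2*i) ` ?A \<union> (\<lambda>i. Suc (2*i)) ` ?B"
  proof (rule set_eqI, rule iffI)
    fix m assume m: "m \<in> {m. m < n \<and> theta m \<le> x}"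
    show "m \<in> (\<lambda>i. 2*i) ` ?A \<union> (\<lambda>i. Suc (2*i)) ` ?B"
    proof (cases "even m")
      case True
      then obtain i where i: "m = 2*i" by blast
      have "i \<in> ?A" using m by (auto simp: i theta_even)
      then show ?thesis using i by blast
    next
      case False
      then obtain i where i: "m = Suc (2*i)" using oddE by (metis Suc_eq_plus1)
      have "i \<in> ?B" using m by (auto simp: i theta_odd)
      then show ?thesis using i by blast
    qed
  next
    fix m assume "m \<in> (\<lambda>i. 2*i) ` ?A \<union> (\<lambda>i. Suc (2*i)) ` ?B"
    then show "m \<in> {m. m < n \<and> theta m \<le> x}"
      by (auto simp: theta_even theta_odd)
  qed
  have disj: "(\<lambda>i. 2*i) ` ?A \<inter> (\<lambda>i. Suc (2*i)) ` ?B = {}" by auto presburger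
  have "C x n = card ((\<lambda>i. 2*i) ` ?A) + card ((\<lambda>i. Suc (2*i)) ` ?B)"
    unfolding C_def eq by (rule card_Un_disjoint) (use disj in auto)
  also have "\<dots> = card ?A + card ?B"
    by (subst card_image, simp add: inj_on_def)+ simp
  finally show ?thesis by (simp add: C_def)
qed

lemma C_nonpos: "y \<le> 0 \<Longrightarrow> C y m = 0"
  unfolding C_def using theta_pos by (auto simp: not_le) (meson less_le_trans not_le)

lemma C_ge1: "1 \<le> y \<Longrightarrow> C y m = m"
proof -
  assume "1 \<le> y"
  then have "{k. k < m \<and> theta k \<le> y} = {..<m}" using theta_le1 by (auto intro: order_trans)
  then show ?thesis by (simp add: C_def)
qed

lemma C_le: "C y m \<le> m"
proof -
  have "C y m \<le> card {..<m}" unfolding C_def by (rule card_mono) auto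
  then show ?thesis by simp
qed

lemma sqrt_step:
  fixes n :: real assumes "2 \<le> n"
  shows "3 * sqrt ((n+1)/2) + 1/2 \<le> 3 * sqrt n"
proof -
  define a where "a = sqrt n"
  define b where "b = sqrt ((n+1)/2)"
  have n0: "0 \<le> n" using assms by simp
  have a2: "a*a = n" using n0 by (simp add: a_def)
  have b2: "b*b = (n+1)/2" using n0 by (simp add: b_def)
  have a0: "a \<ge> 0" "b \<ge> 0" using n0 by (simp_all add: a_def b_def)
  have a75: "a \<ge> 7/5"
  proof (rule ccontr)
    assume "\<not> a \<ge> 7/5"
    then have "a < 7/5" by simp
    then have "a*a < (7/5)*(7/5)" using a0 by (intro mult_strict_mono) auto
    then show False using a2 assms by simp
  qed
  show ?thesis
  proof (rule ccontr)
    assume "\<not> ?thesis"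
    then have lt: "a - 1/6 < b" by (simp add: a_def b_def)
    have "(a-1/6)*(a-1/6) < b*b" using lt a75 by (intro mult_strict_mono) auto
    then have "(n+1)/2 > a*a - a/3 + 1/36" using b2 by (simp add: algebra_simps)
    then have f: "a*a/2 - a/3 - 17/36 < 0" using a2 by simp
    have "(a - 7/5)*(a + 11/15) \<ge> 0" using a75 by (intro mult_nonneg_nonneg) auto
    moreover have "(a - 7/5)*(a + 11/15) = a*a - (2/3)*a - 77/75" by (simp add: field_simps)
    ultimately show False using f by linarith
  qed
qed

lemma C_bound: "0 \<le> x \<Longrightarrow> x \<le> 1 \<Longrightarrow> \<bar>real (C x n) - x * real n\<bar> \<le> 3 * sqrt (real n)"
proof (induction n arbitrary: x rule: less_induct)
  case (less n)
  consider "n = 0" | "n = 1" | "n \<ge> 2" by linarith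
  then show ?case
  proof cases
    case 1 then show ?thesis by (simp add: C_def)
  next
    case 2
    have "C x 1 \<le> 1" using C_le by simp
    then show ?thesis using 2 less.prems by auto
  next
    case 3
    define h where "h = n div 2"
    define h' where "h' = (n+1) div 2"
    have nh: "n = h + h'" "h' = h \<or> h' = Suc h" unfolding h_def h'_def by presburger+
    have hl: "h < n" "h' < n" using 3 nh by arith+
    have h'2: "2 * real h' \<le> real n + 1" using nh by (cases "h' = h") simp_all
    have sq: "3 * sqrt (real h') + 1/2 \<le> 3 * sqrt (real n)"
    proof -
      have "sqrt (real h') \<le> sqrt ((real n + 1)/2)" using h'2 by (intro real_sqrt_le_mono) simp
      moreover have "3 * sqrt ((real n + 1)/2) + 1/2 \<le> 3 * sqrt (real n)"
        using sqrt_step[of "real n"] 3 by simp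
      ultimately show ?thesis by linarith
    qed
    have sqh: "sqrt (real h) \<le> sqrt (real h')" using nh by auto
    have rec: "C x n = C (2*x-1) h' + C (2*x) h" unfolding h_def h'_def by (rule C_rec)
    show ?thesis
    proof (cases "x \<le> 1/2")
      case True
      have c0: "C (2*x-1) h' = 0" using True by (intro C_nonpos) simp
      have IH: "\<bar>real (C (2*x) h) - 2*x * real h\<bar> \<le> 3 * sqrt (real h)"
        using less.IH[OF hl(1), of "2*x"] less.prems True by simp
      have "real n = 2*real h \<or> real n = 2*real h + 1" using nh by auto
      then have "2*x*real h - x * real n = 0 \<or> 2*x*real h - x * real n = - x"
        by (auto simp: algebra_simps)
      moreover have "\<bar>E\<bar> \<le> 1/2" if "E = 0 \<or> E = - x" for E
        using that less.prems True by auto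
      ultimately have e: "\<bar>2*x*real h - x * real n\<bar> \<le> 1/2" by blast
      have rc: "real (C x n) = real (C (2*x) h)" using rec c0 by simp
      show ?thesis using IH e sq sqh unfolding rc abs_le_iff by linarith
    next
      case False
      have c1: "C (2*x) h = h" using False by (intro C_ge1) simp
      have IH: "\<bar>real (C (2*x-1) h') - (2*x-1) * real h'\<bar> \<le> 3 * sqrt (real h')"
        using less.IH[OF hl(2), of "2*x-1"] less.prems False by simp
      have "(real n = 2*real h \<and> real h' = real h) \<or> (real n = 2*real h + 1 \<and> real h' = real h + 1)"
        using nh by auto
      then have "(2*x-1)*real h' + real h - x * real n = 0 \<or> (2*x-1)*real h' + real h - x * real n = x - 1"
        by (auto simp: algebra_simps)
      moreover have "\<bar>E\<bar> \<le> 1/2" if "E = 0 \<or> E = x - 1" for E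
        using that less.prems False by auto
      ultimately have e: "\<bar>(2*x-1)*real h' + real h - x * real n\<bar> \<le> 1/2" by blast
      have rc: "real (C x n) = real (C (2*x-1) h') + real h" using rec c1 by simp
      show ?thesis using IH e sq unfolding rc abs_le_iff by linarith
    qed
  qed
qed



lemma nchunk_Suc: "nchunk (Suc j) = nchunk j + j"
  by (simp add: nchunk_def)

lemma nchunk_0[simp]: "nchunk 0 = 0"
  by (simp add: nchunk_def)

lemma nchunk_mono: "j \<le> k \<Longrightarrow> nchunk j \<le> nchunk k"
  unfolding nchunk_def by (rule sum_mono2) auto

lemma nchunk_formula: "2 * nchunk j + j = j * j"
  by (induction j) (auto simp: nchunk_Suc)

definition chk :: "nat \<Rightarrow> nat" where
  "chk m = (LEAST j. m < nchunk (Suc j))"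

lemma chk_ex: "m < nchunk (Suc (Suc m))"
  by (simp add: nchunk_Suc)

lemma chk_upper: "m < nchunk (Suc (chk m))"
  unfolding chk_def by (rule LeastI[of _ "Suc m"]) (rule chk_ex)

lemma chk_lower: "nchunk (chk m) \<le> m"
proof (cases "chk m")
  case 0 then show ?thesis by (simp add: nchunk_def)
next
  case (Suc j)
  then have "j < chk m" by simp
  then have "\<not> m < nchunk (Suc j)" unfolding chk_def by (rule not_less_Least)
  then show ?thesis using Suc by simp
qed

lemma chk_ge: "nchunk K \<le> m \<Longrightarrow> K \<le> chk m"
proof (rule ccontr)
  assume a: "nchunk K \<le> m" "\<not> K \<le> chk m"
  then have "nchunk (Suc (chk m)) \<le> nchunk K" by (intro nchunk_mono) simp
  then show False using a chk_upper[of m] by simp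
qed

lemma chk_mono: "m \<le> n \<Longrightarrow> chk m \<le> chk n"
  unfolding chk_def[of m] by (rule Least_le) (use chk_upper[of n] in simp)

lemma chk_unique: "nchunk j \<le> m \<Longrightarrow> m < nchunk (Suc j) \<Longrightarrow> chk m = j"
  using chk_ge[of j m] unfolding chk_def by (meson Least_le le_antisym)

lemma Mix_eq: "Mix X0 X1 r = (\<lambda>m. if bmap r (chk m) then X1 m else X0 m)"
  unfolding Mix_def
proof (rule the_equality)
  show "\<forall>j. \<forall>m\<in>{nchunk j..<nchunk (Suc j)}.
          (if bmap r (chk m) then X1 m else X0 m) = (if bmap r j then X1 m else X0 m)"
    using chk_unique by auto
next
  fix Z assume Z: "\<forall>j. \<forall>m\<in>{nchunk j..<nchunk (Suc j)}. Z m = (if bmap r j then X1 m else X0 m)"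
  show "Z = (\<lambda>m. if bmap r (chk m) then X1 m else X0 m)"
  proof
    fix m
    have "m \<in> {nchunk (chk m)..<nchunk (Suc (chk m))}" using chk_lower chk_upper by auto
    then show "Z m = (if bmap r (chk m) then X1 m else X0 m)" using Z by blast
  qed
qed

lemma Mix_app: "Mix X0 X1 r m = (if bmap r (chk m) then X1 m else X0 m)"
  by (simp add: Mix_eq)

lemma card_diff_bound:
  assumes r: "0 \<le> r" "r \<le> 1" and s: "0 \<le> s" "s \<le> 1"
  shows "real (card {m. m < n \<and> Mix X0 X1 s m \<noteq> Mix X0 X1 r m})
           \<le> real (Suc (chk n)) * (\<bar>s - r\<bar> * real (Suc (chk n)) + 6 * sqrt (real (Suc (chk n))))"
proof -
  define J where "J = Suc (chk n)"
  define A where "A = {m. m < n \<and> bfun s (chk m) \<noteq> bfun r (chk m)}"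
  define D where "D = {j. j < J \<and> bfun s j \<noteq> bfun r j}"
  have sub: "{m. m < n \<and> Mix X0 X1 s m \<noteq> Mix X0 X1 r m} \<subseteq> A"
  proof
    fix m assume "m \<in> {m. m < n \<and> Mix X0 X1 s m \<noteq> Mix X0 X1 r m}"
    then show "m \<in> A" using Mix_app[of X0 X1 s m] Mix_app[of X0 X1 r m] unfolding A_def bmap_eq
      by (auto split: if_splits)
  qed
  define g where "g m = (chk m, m - nchunk (chk m))" for m
  have inj: "inj_on g A"
  proof
    fix m1 m2 assume "m1 \<in> A" "m2 \<in> A" "g m1 = g m2"
    then have "chk m1 = chk m2" "m1 - nchunk (chk m1) = m2 - nchunk (chk m2)" by (auto simp: g_def)
    then show "m1 = m2" using chk_lower[of m1] chk_lower[of m2] by (metis le_add_diff_inverse)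
  qed
  have img: "g ` A \<subseteq> D \<times> {..<J}"
  proof
    fix p assume "p \<in> g ` A"
    then obtain m where m: "m \<in> A" "p = g m" by blast
    have c: "chk m \<le> chk n" using m by (intro chk_mono) (simp add: A_def)
    have "m - nchunk (chk m) < chk m" using chk_upper[of m] chk_lower[of m] by (simp add: nchunk_Suc)
    then show "p \<in> D \<times> {..<J}" using m c by (auto simp: g_def D_def A_def J_def)
  qed
  have finD: "finite D" by (simp add: D_def)
  have "card {m. m < n \<and> Mix X0 X1 s m \<noteq> Mix X0 X1 r m} \<le> card A"
    by (rule card_mono[OF _ sub]) (simp add: A_def)
  also have "card A = card (g ` A)" using inj by (simp add: card_image)
  also have "\<dots> \<le> card (D \<times> {..<J})" using img finD by (intro card_mono) auto
  also have "\<dots> = card D * J" by (simp add: card_cartesian_product)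
  finally have c1: "real (card {m. m < n \<and> Mix X0 X1 s m \<noteq> Mix X0 X1 r m}) \<le> real (card D) * real J"
    by (metis of_nat_le_iff of_nat_mult)
  define lo where "lo = min r s"
  define hi where "hi = max r s"
  have D_eq: "D = {j. j < J \<and> theta j \<le> hi} - {j. j < J \<and> theta j \<le> lo}"
    unfolding D_def lo_def hi_def bfun_def using r s by auto
  have "card D = C hi J - C lo J"
    unfolding D_eq C_def by (rule card_Diff_subset) (auto simp: lo_def hi_def)
  moreover have "C lo J \<le> C hi J"
    unfolding C_def by (rule card_mono) (auto simp: lo_def hi_def)
  ultimately have "real (card D) = real (C hi J) - real (C lo J)" by simp
  moreover have "\<bar>real (C hi J) - hi * real J\<bar> \<le> 3 * sqrt (real J)"
    using r s by (intro C_bound) (auto simp: hi_def)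
  moreover have "\<bar>real (C lo J) - lo * real J\<bar> \<le> 3 * sqrt (real J)"
    using r s by (intro C_bound) (auto simp: lo_def)
  moreover have "hi - lo = \<bar>s - r\<bar>" by (auto simp: hi_def lo_def)
  ultimately have "real (card D) \<le> \<bar>s - r\<bar> * real J + 6 * sqrt (real J)"
    by (auto simp: algebra_simps)
  then have X: "real (card D) * real J \<le> real J * (\<bar>s - r\<bar> * real J + 6 * sqrt (real J))"
    by (subst mult.commute, intro mult_right_mono) auto
  show ?thesis using order_trans[OF c1 X] unfolding J_def .
qed


theorem lemma2p8:
  fixes X0 X1 :: "nat \<Rightarrow> bool"
  shows "\<forall>r \<in> {0..1::real}. \<forall>\<epsilon>>0. \<exists>\<delta>>0. \<forall>s \<in> {0..1}.
           \<bar>s - r\<bar> < \<delta> \<longrightarrow> besi_d (Mix X0 X1 s) (Mix X0 X1 r) < ereal \<epsilon>"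
proof (intro ballI allI impI)
  fix r :: real and e :: real
  assume r: "r \<in> {0..1}" and e: "e > 0"
  define K1 where "K1 = max 5 (nat \<lceil>(96/e)^2\<rceil>)"
  show "\<exists>\<delta>>0. \<forall>s\<in>{0..1}. \<bar>s - r\<bar> < \<delta> \<longrightarrow> besi_d (Mix X0 X1 s) (Mix X0 X1 r) < ereal e"
  proof (intro exI[of _ "e/16"] conjI ballI impI)
    show "e/16 > 0" using e by simp
    fix s :: real assume s: "s \<in> {0..1}" and sr: "\<bar>s - r\<bar> < e/16"
    have ev: "\<forall>n \<ge> nchunk K1. ereal (real (card {m. m < n \<and> Mix X0 X1 s m \<noteq> Mix X0 X1 r m}) / real n) \<le> ereal (e/2)"
    proof (intro allI impI)
      fix n assume n: "nchunk K1 \<le> n"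
      define K where "K = chk n"
      define J where "J = Suc K"
      have KK1: "K1 \<le> K" using chk_ge[OF n] K_def by simp
      have "nchunk K \<le> n" using chk_lower K_def by simp
      with nchunk_formula[of K] have nat1: "K*K \<le> 2*n + K" by linarith
      have K5: "5 \<le> K" using KK1 K1_def by simp
      have K5': "5*K \<le> K*K" using K5 by (intro mult_right_mono) auto
      have JJ: "J*J = K*K + 2*K + 1" by (simp add: J_def algebra_simps)
      have J4n: "J*J \<le> 4*n" using nat1 K5 K5' JJ by linarith
      have J4: "real J * real J \<le> 4 * real n"
        using J4n by (metis of_nat_le_iff of_nat_mult of_nat_numeral)
      have npos: "0 < n" using nat1 K5 K5' by linarith
      have JK1: "real K1 \<le> real J" using KK1 J_def by simp
      have "(96/e)^2 \<le> real (nat \<lceil>(96/e)^2\<rceil>)" by linarith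
      also have "\<dots> \<le> real K1" unfolding K1_def by simp
      finally have "(96/e)^2 \<le> real J" using JK1 by linarith
      then have sqJ: "96/e \<le> sqrt (real J)" by (rule real_le_rsqrt)
      have bd: "real (card {m. m < n \<and> Mix X0 X1 s m \<noteq> Mix X0 X1 r m})
           \<le> real J * (\<bar>s - r\<bar> * real J + 6 * sqrt (real J))"
        using card_diff_bound[of r s n X0 X1] r s unfolding J_def K_def by auto
      have "real J * sqrt (real J) * (96/e) \<le> real J * sqrt (real J) * sqrt (real J)"
        using sqJ by (intro mult_left_mono) auto
      also have "\<dots> = real J * real J" by (simp add: mult.assoc)
      also have "\<dots> \<le> 4 * real n" by (rule J4)
      finally have h: "real J * sqrt (real J) * (96/e) \<le> 4 * real n" .
      then have h2: "real J * sqrt (real J) * 96 \<le> 4 * real n * e"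
        using e by (simp add: field_simps)
      then have h2': "6 * (real J * sqrt (real J)) \<le> real n * e / 4" by (simp add: mult.commute)
      have h3: "\<bar>s - r\<bar> * (real J * real J) \<le> (e/16) * (4 * real n)"
        by (rule mult_mono) (use sr J4 e in auto)
      have h3': "(e/16) * (4 * real n) = real n * e / 4" by simp
      have "real (card {m. m < n \<and> Mix X0 X1 s m \<noteq> Mix X0 X1 r m})
           \<le> \<bar>s - r\<bar> * (real J * real J) + 6 * (real J * sqrt (real J))"
        using bd by (simp add: algebra_simps)
      also have "\<dots> \<le> real n * e / 2" using h2' h3 h3' by linarith
      finally have "real (card {m. m < n \<and> Mix X0 X1 s m \<noteq> Mix X0 X1 r m}) / real n \<le> e/2"
        using npos by (simp add: divide_le_eq mult.commute)
      then show "ereal (real (card {m. m < n \<and> Mix X0 X1 s m \<noteq> Mix X0 X1 r m}) / real n) \<le> ereal (e/2)"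
        by simp
    qed
    have "besi_d (Mix X0 X1 s) (Mix X0 X1 r) \<le> ereal (e/2)"
      unfolding besi_d_def by (rule Limsup_bounded) (use ev in \<open>auto simp: eventually_sequentially\<close>)
    also have "\<dots> < ereal e" using e by simp
    finally show "besi_d (Mix X0 X1 s) (Mix X0 X1 r) < ereal e" .
  qed
qed

end
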